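(* Let $k\ge 1$. Any unitary circuit composed of Clifford gates and $T$/$T^\dagger$ gates that implements the $(k+1)$-qubit multiply-controlled $Z$ gate $C^kZ = I^{\otimes(k+1)}-2\ket{1\cdots1}\bra{1\cdots1}$ contains at least $2k-2$ gates equal to $T$ or $T^\dagger$.
   Context: Clifford gates are unitaries mapping Pauli operators ($\pm$ tensor products of $I,X,Y,Z$) to Pauli operators under conjugation. $T=\mathrm{diag}(1,e^{i\pi/4})$. *)

theory Defs
  imports Complex_Main "Jordan_Normal_Form.Matrix"
begin

text \<open>n-qubit operators are 2^n x 2^n complex matrices; basis index i encodes
  qubit j in bit j of i.\<close>

definition qbit :: "nat \<Rightarrow> nat \<Rightarrow> nat" where
  "qbit j i = (i div 2 ^ j) mod 2"

definition dagger :: "complex mat \<Rightarrow> complex mat" where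
  "dagger A = mat (dim_col A) (dim_row A) (\<lambda>(i, j). cnj (A $$ (j, i)))"

definition is_unitary :: "nat \<Rightarrow> complex mat \<Rightarrow> bool" where
  "is_unitary n U \<longleftrightarrow> U \<in> carrier_mat (2^n) (2^n) \<and> U * dagger U = 1\<^sub>m (2^n)
     \<and> dagger U * U = 1\<^sub>m (2^n)"

datatype pauli1 = PI | PX | PY | PZ

fun pauli1_entry :: "pauli1 \<Rightarrow> nat \<Rightarrow> nat \<Rightarrow> complex" where
  "pauli1_entry PI a b = (if a = b then 1 else 0)"
| "pauli1_entry PX a b = (if a \<noteq> b then 1 else 0)"
| "pauli1_entry PY a b = (if a = 0 \<and> b = 1 then - \<i> else if a = 1 \<and> b = 0 then \<i> else 0)"
| "pauli1_entry PZ a b = (if a = b then (if a = 0 then 1 else -1) else 0)"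

definition pauli_tensor :: "nat \<Rightarrow> (nat \<Rightarrow> pauli1) \<Rightarrow> complex mat" where
  "pauli_tensor n p = mat (2^n) (2^n)
     (\<lambda>(r, c). \<Prod>j<n. pauli1_entry (p j) (qbit j r) (qbit j c))"

definition is_pauli :: "nat \<Rightarrow> complex mat \<Rightarrow> bool" where
  "is_pauli n P \<longleftrightarrow> (\<exists>p s. (s = 1 \<or> s = -1) \<and> P = s \<cdot>\<^sub>m pauli_tensor n p)"

definition is_clifford :: "nat \<Rightarrow> complex mat \<Rightarrow> bool" where
  "is_clifford n U \<longleftrightarrow> is_unitary n U \<and>
     (\<forall>P. is_pauli n P \<longrightarrow> is_pauli n (U * P * dagger U))"

definition T_on :: "nat \<Rightarrow> nat \<Rightarrow> complex mat" where
  "T_on n j = mat (2^n) (2^n) (\<lambda>(r, c). if r = c then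
      (if qbit j r = 1 then cis (pi / 4) else 1) else 0)"

definition Tdg_on :: "nat \<Rightarrow> nat \<Rightarrow> complex mat" where
  "Tdg_on n j = mat (2^n) (2^n) (\<lambda>(r, c). if r = c then
      (if qbit j r = 1 then cis (- pi / 4) else 1) else 0)"

datatype gate = Cliff "complex mat" | Tg nat | Tdg nat

definition gate_ok :: "nat \<Rightarrow> gate \<Rightarrow> bool" where
  "gate_ok n g = (case g of Cliff U \<Rightarrow> is_clifford n U | Tg j \<Rightarrow> j < n | Tdg j \<Rightarrow> j < n)"

definition gate_mat :: "nat \<Rightarrow> gate \<Rightarrow> complex mat" where
  "gate_mat n g = (case g of Cliff U \<Rightarrow> U | Tg j \<Rightarrow> T_on n j | Tdg j \<Rightarrow> Tdg_on n j)"

text \<open>Circuit [g1,...,gm] (g1 applied first) implements gm * ... * g1.\<close>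
fun circuit_mat :: "nat \<Rightarrow> gate list \<Rightarrow> complex mat" where
  "circuit_mat n [] = 1\<^sub>m (2^n)"
| "circuit_mat n (g # gs) = circuit_mat n gs * gate_mat n g"

definition is_T_gate :: "gate \<Rightarrow> bool" where
  "is_T_gate g = (case g of Cliff _ \<Rightarrow> False | _ \<Rightarrow> True)"

definition t_count :: "gate list \<Rightarrow> nat" where
  "t_count gs = length (filter is_T_gate gs)"

definition CkZ :: "nat \<Rightarrow> complex mat" where
  "CkZ k = mat (2^(k+1)) (2^(k+1)) (\<lambda>(r, c). if r = c then
      (if r = 2^(k+1) - 1 then -1 else 1) else 0)"

end

theory Submission
  imports Defs
begin


lemma mult_entry:
  "A \<in> carrier_mat n m \<Longrightarrow> B \<in> carrier_mat m p \<Longrightarrow> i < n \<Longrightarrow> j < p \<Longrightarrow>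
   (A * B) $$ (i, j) = (\<Sum>k<m. A $$ (i, k) * B $$ (k, j))"
  by (simp add: scalar_prod_def atLeast0LessThan)

definition tr :: "complex mat \<Rightarrow> complex" where
  "tr A = (\<Sum>i<dim_row A. A $$ (i, i))"

lemma tr_mult:
  "A \<in> carrier_mat n m \<Longrightarrow> B \<in> carrier_mat m n \<Longrightarrow>
   tr (A * B) = (\<Sum>i<n. \<Sum>k<m. A $$ (i, k) * B $$ (k, i))"
  by (auto simp: tr_def scalar_prod_def atLeast0LessThan intro!: sum.cong)

lemma tr_comm:
  "A \<in> carrier_mat n m \<Longrightarrow> B \<in> carrier_mat m n \<Longrightarrow> tr (A * B) = tr (B * A)"
  apply (simp add: tr_mult[of A n m B] tr_mult[of B m n A])
  apply (subst sum.swap)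
  by (simp add: mult.commute)

lemma qbit_Suc: "qbit (Suc j) r = qbit j (r div 2)"
  by (simp add: qbit_def div_mult2_eq)

lemma qbit0_ev: "qbit 0 (2 * m) = 0" and qbit0_od: "qbit 0 (Suc (2 * m)) = 1"
  by (simp_all add: qbit_def)

lemma sum_2N: "(\<Sum>r<2 * N. h r) = (\<Sum>m<N. h (2 * m) + h (2 * m + 1))"
  for h :: "nat \<Rightarrow> 'a::comm_monoid_add"
proof (induction N)
  case 0 then show ?case by simp
next
  case (Suc N)
  have "{..<2 * Suc N} = insert (2*N+1) (insert (2*N) {..<2*N})" by auto
  then show ?case using Suc by (simp add: add_ac)
qed

lemma sum_prod_bits:
  "(\<Sum>r<2^n. \<Prod>j<n. g j (qbit j r)) = (\<Prod>j<n. g j 0 + g j 1)"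
  for g :: "nat \<Rightarrow> nat \<Rightarrow> 'a::comm_semiring_1"
proof (induction n arbitrary: g)
  case 0 then show ?case by simp
next
  case (Suc n)
  have "(\<Sum>r<2^Suc n. \<Prod>j<Suc n. g j (qbit j r))
     = (\<Sum>r<2 * 2^n. g 0 (qbit 0 r) * (\<Prod>j<n. g (Suc j) (qbit j (r div 2))))"
    apply (subst prod.lessThan_Suc_shift)
    by (simp add: qbit_Suc del: prod.lessThan_Suc)
  also have "\<dots> = (\<Sum>m<2^n. (g 0 0 + g 0 1) * (\<Prod>j<n. g (Suc j) (qbit j m)))"
    by (subst sum_2N) (simp add: qbit0_ev qbit0_od distrib_right)
  also have "\<dots> = (g 0 0 + g 0 1) * (\<Prod>j<n. g (Suc j) 0 + g (Suc j) 1)"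
    using Suc.IH[of "\<lambda>j. g (Suc j)"] by (simp add: sum_distrib_left[symmetric])
  also have "\<dots> = (\<Prod>j<Suc n. g j 0 + g j 1)"
    by (subst prod.lessThan_Suc_shift) (simp del: prod.lessThan_Suc)
  finally show ?case .
qed

lemma sum2_prod_bits:
  "(\<Sum>r<2^n. \<Sum>c<2^n. \<Prod>j<n. f j (qbit j r) (qbit j c)) = (\<Prod>j<n. f j 0 0 + f j 0 1 + (f j 1 0 + f j 1 1))"
  for f :: "nat \<Rightarrow> nat \<Rightarrow> nat \<Rightarrow> 'a::comm_semiring_1"
proof -
  have "\<And>r. (\<Sum>c<2^n. \<Prod>j<n. f j (qbit j r) (qbit j c)) = (\<Prod>j<n. f j (qbit j r) 0 + f j (qbit j r) 1)"
    by (rule sum_prod_bits)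
  then show ?thesis using sum_prod_bits[of "\<lambda>j a. f j a 0 + f j a 1" n] by simp
qed

lemma qbit_lt2: "qbit j r < 2" by (simp add: qbit_def)

lemma qbit_all1: "j < n \<Longrightarrow> qbit j (2^n - 1) = 1"
proof -
  assume j: "j < n"
  have "(2^n - 1) div 2^j = 2^(n-j) - (1::nat)"
  proof -
    have "2^n - 1 = (2^(n-j) - 1) * 2^j + (2^j - (1::nat))"
      using j by (simp add: algebra_simps power_add[symmetric])
    moreover have "2^j - 1 < (2::nat)^j" by simp
    ultimately show ?thesis by (metis div_mult_self1 div_less add.commute power_not_zero zero_neq_numeral add_0)
  qed
  moreover have "odd (2^(n-j) - (1::nat))" using j by simp
  then have "(2^(n-j) - (1::nat)) mod 2 = 1" by (meson odd_iff_mod_2_eq_one)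
  ultimately show ?thesis by (simp add: qbit_def)
qed



abbreviation s2 :: complex where "s2 \<equiv> complex_of_real (sqrt 2)"

lemma s2_sq: "s2 * s2 = 2"
proof -
  have "s2 * s2 = complex_of_real (sqrt 2 * sqrt 2)" by (rule of_real_mult[symmetric])
  also have "\<dots> = 2" by simp
  finally show ?thesis .
qed

lemma s2_lemma: "w * w = 2 \<Longrightarrow> (A + B * w + \<i> * (C + D * w)) * w = of_int (2 * b) + A * w + \<i> * (of_int (2 * d) + C * w)" if "B = of_int b" "D = of_int d" for w A B C D :: complex
proof -
  assume w: "w * w = 2"
  have "(A + B * w + \<i> * (C + D * w)) * w = (2 * B + A * w + \<i> * (2 * D + C * w)) + (B + \<i> * D) * (w * w - 2)"
    by (simp add: algebra_simps)
  then show ?thesis using w that by simp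
qed

definition Lset :: "nat \<Rightarrow> complex set" where
  "Lset t = {z. \<exists>a b c d::int. z * s2 ^ t = (of_int a + of_int b * s2) + \<i> * (of_int c + of_int d * s2)}"

lemma L_add: "x \<in> Lset t \<Longrightarrow> y \<in> Lset t \<Longrightarrow> x + y \<in> Lset t"
  unfolding Lset_def
proof (clarify)
  fix a b c d a' b' c' d' :: int
  assume "x * s2 ^ t = of_int a + of_int b * s2 + \<i> * (of_int c + of_int d * s2)"
    "y * s2 ^ t = of_int a' + of_int b' * s2 + \<i> * (of_int c' + of_int d' * s2)"
  then have "(x + y) * s2 ^ t = of_int (a + a') + of_int (b + b') * s2 + \<i> * (of_int (c + c') + of_int (d + d') * s2)"
    by (simp add: distrib_right algebra_simps)
  then show "\<exists>a b c d::int. (x + y) * s2 ^ t = (of_int a + of_int b * s2) + \<i> * (of_int c + of_int d * s2)" by blast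
qed

lemma L_neg: "x \<in> Lset t \<Longrightarrow> - x \<in> Lset t"
  unfolding Lset_def
proof (clarify)
  fix a b c d :: int
  assume "x * s2 ^ t = of_int a + of_int b * s2 + \<i> * (of_int c + of_int d * s2)"
  then have "(- x) * s2 ^ t = of_int (- a) + of_int (- b) * s2 + \<i> * (of_int (- c) + of_int (- d) * s2)"
    by (simp add: algebra_simps)
  then show "\<exists>a b c d::int. (- x) * s2 ^ t = (of_int a + of_int b * s2) + \<i> * (of_int c + of_int d * s2)" by blast
qed

lemma L_sub: "x \<in> Lset t \<Longrightarrow> y \<in> Lset t \<Longrightarrow> x - y \<in> Lset t"
  using L_add[of x t "-y"] L_neg[of y t] by simp

lemma L_mono: "x \<in> Lset t \<Longrightarrow> x \<in> Lset (Suc t)"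
  unfolding Lset_def
proof (clarify)
  fix a b c d :: int
  assume h: "x * s2 ^ t = of_int a + of_int b * s2 + \<i> * (of_int c + of_int d * s2)"
  have "x * s2 ^ Suc t = (x * s2 ^ t) * s2" by (simp add: algebra_simps)
  also have "\<dots> = of_int (2 * b) + of_int a * s2 + \<i> * (of_int (2 * d) + of_int c * s2)"
    unfolding h by (rule s2_lemma[OF refl refl s2_sq])
  finally show "\<exists>a b c d::int. x * s2 ^ Suc t = (of_int a + of_int b * s2) + \<i> * (of_int c + of_int d * s2)" by blast
qed

lemma L_div: "x \<in> Lset t \<Longrightarrow> x / s2 \<in> Lset (Suc t)"
  unfolding Lset_def
proof (clarify)
  fix a b c d :: int
  assume h: "x * s2 ^ t = of_int a + of_int b * s2 + \<i> * (of_int c + of_int d * s2)"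
  have "x / s2 * s2 ^ Suc t = x * s2 ^ t" by simp
  then show "\<exists>a' b' c' d'::int. x / s2 * s2 ^ Suc t = (of_int a' + of_int b' * s2) + \<i> * (of_int c' + of_int d' * s2)"
    using h by metis
qed

definition Gint :: "complex set" where
  "Gint = {z. \<exists>a b::int. z = of_int a + \<i> * of_int b}"

lemma Gint_L0: "z \<in> Gint \<Longrightarrow> z \<in> Lset 0"
  unfolding Gint_def Lset_def
proof clarify
  fix a b :: int
  have "(of_int a + \<i> * of_int b) * s2 ^ 0 = of_int a + of_int 0 * s2 + \<i> * (of_int b + of_int 0 * s2)" by simp
  then show "\<exists>a' b' c d::int. (of_int a + \<i> * of_int b) * s2 ^ 0 = (of_int a' + of_int b' * s2) + \<i> * (of_int c + of_int d * s2)" by blast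
qed

lemma Gint_mult: "x \<in> Gint \<Longrightarrow> y \<in> Gint \<Longrightarrow> x * y \<in> Gint"
  unfolding Gint_def
proof clarify
  fix a b c d :: int
  have "(of_int a + \<i> * of_int b) * (of_int c + \<i> * of_int d) = of_int (a*c - b*d) + \<i> * of_int (a*d + b*c)"
    by (simp add: algebra_simps)
  then show "\<exists>a' b'::int. (of_int a + \<i> * of_int b) * (of_int c + \<i> * of_int d) = of_int a' + \<i> * of_int b'" by blast
qed

lemma Gint_prod: "(\<And>j. j \<in> A \<Longrightarrow> f j \<in> Gint) \<Longrightarrow> prod f A \<in> Gint"
proof (induction A rule: infinite_finite_induct)
  case (infinite A) then show ?case unfolding Gint_def by (auto intro: exI[of _ 1] exI[of _ 0])
next
  case empty then show ?case unfolding Gint_def by (auto intro: exI[of _ 1] exI[of _ 0])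
next
  case (insert x F) then show ?case by (simp add: Gint_mult)
qed

lemma Gint_units: "(1::complex) \<in> Gint" "(-1::complex) \<in> Gint" "\<i> \<in> Gint" "- \<i> \<in> Gint" "(0::complex) \<in> Gint"
  unfolding Gint_def
  apply (rule CollectI, rule exI[of _ 1], rule exI[of _ 0], simp)
  apply (rule CollectI, rule exI[of _ "-1"], rule exI[of _ 0], simp)
  apply (rule CollectI, rule exI[of _ 0], rule exI[of _ 1], simp)
  apply (rule CollectI, rule exI[of _ 0], rule exI[of _ "-1"], simp)
  apply (rule CollectI, rule exI[of _ 0], rule exI[of _ 0], simp)
  done

lemma sqrt2_pow_even: "sqrt 2 ^ (2 * m) = (2::real) ^ m"
  by (simp add: power_mult)

lemma sqrt2_shape: "m \<ge> 1 \<Longrightarrow> \<exists>e f::int. (of_int a + of_int b * sqrt 2) * sqrt 2 ^ m = 2 * of_int e + of_int f * sqrt (2::real)"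
proof (induction m rule: dec_induct)
  case base
  have "(of_int a + of_int b * sqrt 2) * sqrt 2 ^ 1 = 2 * of_int b + of_int a * sqrt (2::real)"
    by (simp add: algebra_simps)
  then show ?case by blast
next
  case (step m)
  then obtain e f where h: "(of_int a + of_int b * sqrt 2) * sqrt 2 ^ m = 2 * of_int e + of_int f * sqrt (2::real)" by blast
  have "(of_int a + of_int b * sqrt 2) * sqrt 2 ^ Suc m = ((of_int a + of_int b * sqrt 2) * sqrt 2 ^ m) * sqrt 2"
    by (simp add: algebra_simps)
  also have "\<dots> = 2 * of_int f + of_int (2 * e) * sqrt (2::real)" unfolding h by (simp add: algebra_simps)
  finally show ?case by blast
qed

lemma odd_not_sqrt2: "odd (q::int) \<Longrightarrow> of_int q \<noteq> of_int f * sqrt (2::real)"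
proof
  assume o: "odd q" and h: "of_int q = of_int f * sqrt (2::real)"
  then have "(of_int q)^2 = (of_int f)^2 * (sqrt 2)^2" by (simp add: power_mult_distrib)
  then have "real_of_int (q^2) = real_of_int (2 * f^2)" by simp
  then have "q^2 = 2 * f^2" by (simp only: of_int_eq_iff)
  moreover have "odd (q^2)" using o by simp
  ultimately show False by simp
qed

lemma final_arith:
  assumes k: "k \<ge> 2" and z: "((2::complex)^(k+1) - 4) / 2^(k+1) \<in> Lset t"
  shows "t \<ge> 2 * k - 2"
proof (rule ccontr)
  assume "\<not> t \<ge> 2 * k - 2"
  then have "2 * k - 2 - t \<ge> 1" "t + (2 * k - 2 - t) = 2 * k - 2" by auto
  then obtain m where m: "m \<ge> 1" "t + m = 2 * k - 2" by blast
  from z obtain a b c d :: int where h: "((2::complex)^(k+1) - 4) / 2^(k+1) * s2 ^ t = (of_int a + of_int b * s2) + \<i> * (of_int c + of_int d * s2)"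
    unfolding Lset_def by blast
  have "Re (((2::complex)^(k+1) - 4) / 2^(k+1) * s2 ^ t) = ((2::real)^(k+1) - 4) / 2^(k+1) * sqrt 2 ^ t"
  proof -
    have "((2::complex)^(k+1) - 4) / 2^(k+1) * s2 ^ t = complex_of_real (((2::real)^(k+1) - 4) / 2^(k+1) * sqrt 2 ^ t)"
      by simp
    then show ?thesis by (simp only: Re_complex_of_real)
  qed
  moreover have "Re ((of_int a + of_int b * s2) + \<i> * (of_int c + of_int d * s2)) = of_int a + of_int b * sqrt 2"
    by simp
  ultimately have r: "((2::real)^(k+1) - 4) / 2^(k+1) * sqrt 2 ^ t = of_int a + of_int b * sqrt 2"
    using h by metis
  have "((2::real)^(k+1) - 4) / 2^(k+1) * sqrt 2 ^ t * sqrt 2 ^ m = ((2::real)^(k+1) - 4) / 2^(k+1) * 2 ^ (k - 1)"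
  proof -
    have "sqrt 2 ^ t * sqrt 2 ^ m = sqrt 2 ^ (2 * (k - 1))" using m by (simp add: power_add[symmetric] algebra_simps)
    then show ?thesis by (simp add: sqrt2_pow_even mult.assoc)
  qed
  also have "\<dots> = of_int (2 ^ (k - 1) - 1)"
  proof -
    have "k + 1 = (k - 1) + 2" using k by simp
    then have "(2::real)^(k+1) = 2^(k-1) * 2^2" by (metis power_add)
    then have "(2::real)^(k+1) = 4 * 2^(k-1)" by simp
    then show ?thesis by (simp add: field_simps)
  qed
  finally have e1: "(of_int a + of_int b * sqrt 2) * sqrt 2 ^ m = of_int (2 ^ (k - 1) - 1)" unfolding r[symmetric] .
  obtain e f :: int where e2: "(of_int a + of_int b * sqrt 2) * sqrt 2 ^ m = 2 * of_int e + of_int f * sqrt (2::real)"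
    using sqrt2_shape[OF m(1)] by blast
  have "of_int (2 ^ (k - 1) - 1 - 2 * e) = of_int f * sqrt (2::real)" using e1 e2 by simp
  moreover have "odd ((2::int) ^ (k - 1) - 1 - 2 * e)" using k by simp
  ultimately show False using odd_not_sqrt2 by blast
qed



lemma pauli_carrier[simp]: "pauli_tensor n p \<in> carrier_mat (2^n) (2^n)"
  by (simp add: pauli_tensor_def)

lemma pauli_dims[simp]: "dim_row (pauli_tensor n p) = 2^n" "dim_col (pauli_tensor n p) = 2^n"
  by (simp_all add: pauli_tensor_def)

lemma pauli_entry: "r < 2^n \<Longrightarrow> c < 2^n \<Longrightarrow>
  pauli_tensor n p $$ (r, c) = (\<Prod>j<n. pauli1_entry (p j) (qbit j r) (qbit j c))"
  by (simp add: pauli_tensor_def)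

lemma is_pauli_carrier: "is_pauli n P \<Longrightarrow> P \<in> carrier_mat (2^n) (2^n)"
  by (auto simp: is_pauli_def pauli_tensor_def)

lemma dagger_carrier[simp]: "A \<in> carrier_mat m k \<Longrightarrow> dagger A \<in> carrier_mat k m"
  by (simp add: dagger_def)

lemma mult_carrier_sq[simp]: "A \<in> carrier_mat m m \<Longrightarrow> B \<in> carrier_mat m m \<Longrightarrow> A * B \<in> carrier_mat m m"
  by (rule mult_carrier_mat)

lemma dagger_carrier_sq[simp]: "A \<in> carrier_mat m m \<Longrightarrow> dagger A \<in> carrier_mat m m"
  by (simp add: dagger_def)

lemma tr_smult_left: "A \<in> carrier_mat n m \<Longrightarrow> B \<in> carrier_mat m n \<Longrightarrow> tr ((s \<cdot>\<^sub>m A) * B) = s * tr (A * B)"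
  using tr_mult[of "s \<cdot>\<^sub>m A" n m B] tr_mult[of A n m B]
  by (simp add: sum_distrib_left mult.assoc)

lemma tr_add_left: "A \<in> carrier_mat n m \<Longrightarrow> B \<in> carrier_mat n m \<Longrightarrow> C \<in> carrier_mat m n \<Longrightarrow>
   tr ((A + B) * C) = tr (A * C) + tr (B * C)"
  using tr_mult[of "A + B" n m C] tr_mult[of A n m C] tr_mult[of B n m C]
  by (simp add: distrib_right sum.distrib)

lemma sum2: "(\<Sum>a<2. f a) = f 0 + f (1::nat)" for f :: "nat \<Rightarrow> 'a::comm_monoid_add"
  by (simp add: numeral_2_eq_2)

lemma pauli_pair_Gint: "(\<Sum>a<2. \<Sum>b<2. pauli1_entry x a b * pauli1_entry y b a) / 2 \<in> Gint"
proof -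
  have "(\<Sum>a<2. \<Sum>b<2. pauli1_entry x a b * pauli1_entry y b a) / 2 = 0 \<or>
        (\<Sum>a<2. \<Sum>b<2. pauli1_entry x a b * pauli1_entry y b a) / 2 = 1"
    by (cases x; cases y; simp add: sum2)
  then show ?thesis using Gint_units by auto
qed

lemma tr_pauli_pauli:
  "tr (pauli_tensor n p * pauli_tensor n q) =
   (\<Prod>j<n. \<Sum>a<2. \<Sum>b<2. pauli1_entry (p j) a b * pauli1_entry (q j) b a)"
proof -
  have "tr (pauli_tensor n p * pauli_tensor n q) =
    (\<Sum>r<2^n. \<Sum>c<2^n. \<Prod>j<n. pauli1_entry (p j) (qbit j r) (qbit j c) * pauli1_entry (q j) (qbit j c) (qbit j r))"
    by (simp add: tr_mult[of _ "2^n" "2^n"] pauli_entry prod.distrib)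
  also have "\<dots> = (\<Prod>j<n. \<Sum>a<2. \<Sum>b<2. pauli1_entry (p j) a b * pauli1_entry (q j) b a)"
    by (subst sum2_prod_bits) (simp add: sum2 add_ac)
  finally show ?thesis .
qed

lemma base_L0: "tr (pauli_tensor n p * pauli_tensor n q) / 2^n \<in> Lset 0"
proof -
  have "tr (pauli_tensor n p * pauli_tensor n q) / 2^n =
     (\<Prod>j<n. (\<Sum>a<2. \<Sum>b<2. pauli1_entry (p j) a b * pauli1_entry (q j) b a) / 2)"
    by (simp add: tr_pauli_pauli prod_dividef)
  also have "\<dots> \<in> Gint" by (rule Gint_prod) (rule pauli_pair_Gint)
  finally show ?thesis by (rule Gint_L0)
qed



definition Dmat :: "nat \<Rightarrow> nat \<Rightarrow> (nat \<Rightarrow> complex) \<Rightarrow> complex mat" where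
  "Dmat n j d = mat (2^n) (2^n) (\<lambda>(r, c). if r = c then d (qbit j r) else 0)"

lemma Dmat_carrier[simp]: "Dmat n j d \<in> carrier_mat (2^n) (2^n)"
  by (simp add: Dmat_def)

lemma diagL: "M \<in> carrier_mat (2^n) m \<Longrightarrow> r < 2^n \<Longrightarrow> c < m \<Longrightarrow>
  (Dmat n j d * M) $$ (r, c) = d (qbit j r) * M $$ (r, c)"
proof -
  assume M: "M \<in> carrier_mat (2^n) m" and r: "r < 2^n" and c: "c < m"
  have "(Dmat n j d * M) $$ (r, c) = (\<Sum>k<2^n. (if r = k then d (qbit j r) else 0) * M $$ (k, c))"
    by (subst mult_entry[OF Dmat_carrier M r c]) (auto simp: Dmat_def r intro!: sum.cong)
  also have "\<dots> = (\<Sum>k<2^n. (if k = r then d (qbit j r) * M $$ (r, c) else 0))"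
    by (rule sum.cong) auto
  also have "\<dots> = d (qbit j r) * M $$ (r, c)" using r by (simp add: sum.delta)
  finally show ?thesis .
qed

lemma diagR: "M \<in> carrier_mat m (2^n) \<Longrightarrow> r < m \<Longrightarrow> c < 2^n \<Longrightarrow>
  (M * Dmat n j d) $$ (r, c) = M $$ (r, c) * d (qbit j c)"
proof -
  assume M: "M \<in> carrier_mat m (2^n)" and r: "r < m" and c: "c < 2^n"
  have "(M * Dmat n j d) $$ (r, c) = (\<Sum>k<2^n. M $$ (r, k) * (if k = c then d (qbit j k) else 0))"
    by (subst mult_entry[OF M Dmat_carrier r c]) (auto simp: Dmat_def c intro!: sum.cong)
  also have "\<dots> = (\<Sum>k<2^n. (if k = c then M $$ (r, c) * d (qbit j c) else 0))"
    by (rule sum.cong) auto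
  also have "\<dots> = M $$ (r, c) * d (qbit j c)" using c by (simp add: sum.delta)
  finally show ?thesis .
qed

lemma pauli_split: "j < n \<Longrightarrow> r < 2^n \<Longrightarrow> c < 2^n \<Longrightarrow>
  pauli_tensor n p $$ (r, c) = pauli1_entry (p j) (qbit j r) (qbit j c) *
     (\<Prod>i\<in>{..<n} - {j}. pauli1_entry (p i) (qbit i r) (qbit i c))"
  by (simp add: pauli_entry prod.remove)

lemma rest_upd: "(\<Prod>i\<in>{..<n} - {j}. pauli1_entry ((p(j := x)) i) (qbit i r) (qbit i c)) =
    (\<Prod>i\<in>{..<n} - {j}. pauli1_entry (p i) (qbit i r) (qbit i c))"
  by (rule prod.cong) auto

lemma conj_general:
  assumes j: "j < n"
    and slot: "\<And>a b. a < 2 \<Longrightarrow> b < 2 \<Longrightarrow> dl a * pauli1_entry (p j) a b * dr b = \<alpha> * pauli1_entry x a b + \<beta> * pauli1_entry y a b"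
  shows "Dmat n j dl * pauli_tensor n p * Dmat n j dr =
    \<alpha> \<cdot>\<^sub>m pauli_tensor n (p(j := x)) + \<beta> \<cdot>\<^sub>m pauli_tensor n (p(j := y))"
proof (rule eq_matI)
  fix r c assume r0: "r < dim_row (\<alpha> \<cdot>\<^sub>m pauli_tensor n (p(j := x)) + \<beta> \<cdot>\<^sub>m pauli_tensor n (p(j := y)))"
    and c0: "c < dim_col (\<alpha> \<cdot>\<^sub>m pauli_tensor n (p(j := x)) + \<beta> \<cdot>\<^sub>m pauli_tensor n (p(j := y)))"
  then have r: "r < 2^n" and c: "c < 2^n" by (simp_all add: pauli_tensor_def)
  define R where "R = (\<Prod>i\<in>{..<n} - {j}. pauli1_entry (p i) (qbit i r) (qbit i c))"
  have "(Dmat n j dl * pauli_tensor n p * Dmat n j dr) $$ (r, c) =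
      dl (qbit j r) * pauli_tensor n p $$ (r, c) * dr (qbit j c)"
    by (simp only: diagR[OF mult_carrier_mat[OF Dmat_carrier pauli_carrier] r c] diagL[OF pauli_carrier r c])
  also have "\<dots> = (dl (qbit j r) * pauli1_entry (p j) (qbit j r) (qbit j c) * dr (qbit j c)) * R"
    by (simp add: pauli_split[OF j r c] R_def)
  also have "\<dots> = (\<alpha> * pauli1_entry x (qbit j r) (qbit j c) + \<beta> * pauli1_entry y (qbit j r) (qbit j c)) * R"
    by (simp add: slot qbit_lt2)
  also have "\<dots> = (\<alpha> \<cdot>\<^sub>m pauli_tensor n (p(j := x)) + \<beta> \<cdot>\<^sub>m pauli_tensor n (p(j := y))) $$ (r, c)"
    using r c j by (simp add: pauli_split[OF j r c] rest_upd R_def algebra_simps)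
  finally show "(Dmat n j dl * pauli_tensor n p * Dmat n j dr) $$ (r, c) =
      (\<alpha> \<cdot>\<^sub>m pauli_tensor n (p(j := x)) + \<beta> \<cdot>\<^sub>m pauli_tensor n (p(j := y))) $$ (r, c)" .
qed (simp_all add: pauli_tensor_def Dmat_def)

lemma T_Dmat: "T_on n j = Dmat n j (\<lambda>b. if b = 1 then cis (pi / 4) else 1)"
  unfolding T_on_def Dmat_def by (rule refl)

lemma Tdg_Dmat: "Tdg_on n j = Dmat n j (\<lambda>b. if b = 1 then cis (- pi / 4) else 1)"
  unfolding Tdg_on_def Dmat_def by (rule refl)

lemma dagger_T: "dagger (T_on n j) = Tdg_on n j"
  by (rule eq_matI) (auto simp: dagger_def T_on_def Tdg_on_def cis_cnj)

lemma dagger_Tdg: "dagger (Tdg_on n j) = T_on n j"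
  by (rule eq_matI) (auto simp: dagger_def T_on_def Tdg_on_def cis_cnj)

lemma w_eq: "cis (pi / 4) = (1 + \<i>) / s2"
  by (simp add: complex_eq_iff cos_45 sin_45 cis.sel real_div_sqrt)

lemma v_eq: "cis (- pi / 4) = (1 - \<i>) / s2"
proof -
  have "cis (- pi / 4) = cnj (cis (pi / 4))" by (simp add: cis_cnj)
  then show ?thesis by (simp add: w_eq)
qed



lemma s2_nz[simp]: "s2 \<noteq> 0" by simp

abbreviation Wf :: "nat \<Rightarrow> complex" where "Wf \<equiv> (\<lambda>b. if b = 1 then cis (pi / 4) else 1)"
abbreviation Vf :: "nat \<Rightarrow> complex" where "Vf \<equiv> (\<lambda>b. if b = 1 then cis (- pi / 4) else 1)"

lemma v_eq': "cis (- (pi / 4)) = (1 - \<i>) / s2" using v_eq by simp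

lemma two_cases: "a < (2::nat) \<Longrightarrow> a = 0 \<or> a = 1" by auto

lemma slot_IZ: "z = PI \<or> z = PZ \<Longrightarrow> a < 2 \<Longrightarrow> b < 2 \<Longrightarrow>
   dl a * pauli1_entry z a b * dr b = 1 * pauli1_entry z a b + 0 * pauli1_entry z a b"
  if "dl 0 * dr 0 = 1" "dl 1 * dr 1 = 1"
  using two_cases[of a] two_cases[of b] that by (auto simp: mult.commute)

lemma VW0: "Vf 0 * Wf 0 = 1" "Vf 1 * Wf 1 = 1" "Wf 0 * Vf 0 = 1" "Wf 1 * Vf 1 = 1"
  by (simp_all add: cis_mult)

lemma slotT_X: "a < 2 \<Longrightarrow> b < 2 \<Longrightarrow>
   Vf a * pauli1_entry PX a b * Wf b = (1/s2) * pauli1_entry PX a b + (-1/s2) * pauli1_entry PY a b"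
  using two_cases[of a] two_cases[of b] by (auto simp: w_eq v_eq v_eq' field_simps)

lemma slotT_Y: "a < 2 \<Longrightarrow> b < 2 \<Longrightarrow>
   Vf a * pauli1_entry PY a b * Wf b = (1/s2) * pauli1_entry PX a b + (1/s2) * pauli1_entry PY a b"
  using two_cases[of a] two_cases[of b] by (auto simp: w_eq v_eq v_eq' field_simps)

lemma slotTd_X: "a < 2 \<Longrightarrow> b < 2 \<Longrightarrow>
   Wf a * pauli1_entry PX a b * Vf b = (1/s2) * pauli1_entry PX a b + (1/s2) * pauli1_entry PY a b"
  using two_cases[of a] two_cases[of b] by (auto simp: w_eq v_eq v_eq' field_simps)

lemma slotTd_Y: "a < 2 \<Longrightarrow> b < 2 \<Longrightarrow>
   Wf a * pauli1_entry PY a b * Vf b = (-1/s2) * pauli1_entry PX a b + (1/s2) * pauli1_entry PY a b"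
  using two_cases[of a] two_cases[of b] by (auto simp: w_eq v_eq v_eq' field_simps)

lemma comb1: "u \<in> Lset t \<Longrightarrow> 1 * u + 0 * v \<in> Lset (Suc t)" by (simp add: L_mono)
lemma comb2: "u \<in> Lset t \<Longrightarrow> v \<in> Lset t \<Longrightarrow> (1/s2) * u + (-1/s2) * v \<in> Lset (Suc t)"
proof -
  assume "u \<in> Lset t" "v \<in> Lset t"
  then have "(u - v) / s2 \<in> Lset (Suc t)" by (simp add: L_div L_sub)
  moreover have "(1/s2) * u + (-1/s2) * v = (u - v) / s2" by (simp add: field_simps)
  ultimately show ?thesis by simp
qed
lemma comb3: "u \<in> Lset t \<Longrightarrow> v \<in> Lset t \<Longrightarrow> (1/s2) * u + (1/s2) * v \<in> Lset (Suc t)"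
proof -
  assume "u \<in> Lset t" "v \<in> Lset t"
  then have "(u + v) / s2 \<in> Lset (Suc t)" by (simp add: L_div L_add)
  moreover have "(1/s2) * u + (1/s2) * v = (u + v) / s2" by (simp add: field_simps)
  ultimately show ?thesis by simp
qed
lemma comb4: "u \<in> Lset t \<Longrightarrow> v \<in> Lset t \<Longrightarrow> (-1/s2) * u + (1/s2) * v \<in> Lset (Suc t)"
proof -
  assume "u \<in> Lset t" "v \<in> Lset t"
  then have "(v - u) / s2 \<in> Lset (Suc t)" by (simp add: L_div L_sub)
  moreover have "(-1/s2) * u + (1/s2) * v = (v - u) / s2" by (simp add: field_simps)
  ultimately show ?thesis by simp
qed

definition phi :: "nat \<Rightarrow> nat \<Rightarrow> complex mat \<Rightarrow> bool" where
  "phi n t A \<longleftrightarrow> A \<in> carrier_mat (2^n) (2^n) \<and> (\<forall>p. tr (pauli_tensor n p * A) / 2^n \<in> Lset t)"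

lemma tr_cyc:
  assumes "X \<in> carrier_mat m m" "G \<in> carrier_mat m m" "A \<in> carrier_mat m m" "H \<in> carrier_mat m m"
  shows "tr (X * (G * A * H)) = tr ((H * X * G) * A)"
proof -
  have "X * (G * A * H) = (X * G * A) * H" using assms by (simp add: assoc_mult_mat[of _ m m _ m _ m])
  then have "tr (X * (G * A * H)) = tr (H * (X * G * A))"
    using tr_comm[of "X * G * A" m m H] assms by simp
  also have "H * (X * G * A) = (H * X * G) * A" using assms by (simp add: assoc_mult_mat[of _ m m _ m _ m])
  finally show ?thesis .
qed

lemma step_diag:
  assumes ph: "phi n t A" and j: "j < n"
    and slot: "\<And>z. \<exists>\<alpha> \<beta> x y. (\<forall>a b. a < 2 \<longrightarrow> b < 2 \<longrightarrow>
        dl a * pauli1_entry z a b * dr b = \<alpha> * pauli1_entry x a b + \<beta> * pauli1_entry y a b) \<and>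
        (\<forall>u v. u \<in> Lset t \<longrightarrow> v \<in> Lset t \<longrightarrow> \<alpha> * u + \<beta> * v \<in> Lset (Suc t))"
  shows "phi n (Suc t) (Dmat n j dr * A * Dmat n j dl)"
  unfolding phi_def
proof (intro conjI allI)
  have A: "A \<in> carrier_mat (2^n) (2^n)" using ph by (simp add: phi_def)
  then show "Dmat n j dr * A * Dmat n j dl \<in> carrier_mat (2^n) (2^n)" by (meson Dmat_carrier mult_carrier_mat)
  fix p
  obtain \<alpha> \<beta> x y where s1: "\<And>a b. a < 2 \<Longrightarrow> b < 2 \<Longrightarrow>
        dl a * pauli1_entry (p j) a b * dr b = \<alpha> * pauli1_entry x a b + \<beta> * pauli1_entry y a b"
    and s2': "\<And>u v. u \<in> Lset t \<Longrightarrow> v \<in> Lset t \<Longrightarrow> \<alpha> * u + \<beta> * v \<in> Lset (Suc t)"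
    using slot[of "p j"] by blast
  have "tr (pauli_tensor n p * (Dmat n j dr * A * Dmat n j dl)) = tr ((Dmat n j dl * pauli_tensor n p * Dmat n j dr) * A)"
    by (rule tr_cyc[of _ "2^n"]) (simp_all add: A)
  also have "\<dots> = tr ((\<alpha> \<cdot>\<^sub>m pauli_tensor n (p(j := x)) + \<beta> \<cdot>\<^sub>m pauli_tensor n (p(j := y))) * A)"
    by (simp only: conj_general[where p=p and dl=dl and dr=dr and \<alpha>=\<alpha> and \<beta>=\<beta> and x=x and y=y, OF j s1])
  also have "\<dots> = \<alpha> * tr (pauli_tensor n (p(j := x)) * A) + \<beta> * tr (pauli_tensor n (p(j := y)) * A)"
    by (simp add: tr_add_left[of _ "2^n" "2^n"] tr_smult_left[of _ "2^n" "2^n"] A)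
  finally have "tr (pauli_tensor n p * (Dmat n j dr * A * Dmat n j dl)) / 2^n =
     \<alpha> * (tr (pauli_tensor n (p(j := x)) * A) / 2^n) + \<beta> * (tr (pauli_tensor n (p(j := y)) * A) / 2^n)"
    by (simp add: field_simps)
  also have "\<dots> \<in> Lset (Suc t)" using ph by (intro s2') (simp_all add: phi_def)
  finally show "tr (pauli_tensor n p * (Dmat n j dr * A * Dmat n j dl)) / 2 ^ n \<in> Lset (Suc t)" .
qed

lemma step_T: "phi n t A \<Longrightarrow> j < n \<Longrightarrow> phi n (Suc t) (T_on n j * A * dagger (T_on n j))"
  apply (subst dagger_T) unfolding T_Dmat Tdg_Dmat
proof (rule step_diag)
  fix z show "\<exists>\<alpha> \<beta> x y. (\<forall>a b. a < 2 \<longrightarrow> b < 2 \<longrightarrow>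
        Vf a * pauli1_entry z a b * Wf b = \<alpha> * pauli1_entry x a b + \<beta> * pauli1_entry y a b) \<and>
        (\<forall>u v. u \<in> Lset t \<longrightarrow> v \<in> Lset t \<longrightarrow> \<alpha> * u + \<beta> * v \<in> Lset (Suc t))"
  proof (cases z)
    case PI then show ?thesis using slot_IZ[where dl=Vf and dr=Wf] VW0 comb1 by blast
  next
    case PZ then show ?thesis using slot_IZ[where dl=Vf and dr=Wf] VW0 comb1 by blast
  next
    case PX then show ?thesis using slotT_X comb2 by blast
  next
    case PY then show ?thesis using slotT_Y comb3 by blast
  qed
qed

lemma step_Tdg: "phi n t A \<Longrightarrow> j < n \<Longrightarrow> phi n (Suc t) (Tdg_on n j * A * dagger (Tdg_on n j))"
  apply (subst dagger_Tdg) unfolding T_Dmat Tdg_Dmat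
proof (rule step_diag)
  fix z show "\<exists>\<alpha> \<beta> x y. (\<forall>a b. a < 2 \<longrightarrow> b < 2 \<longrightarrow>
        Wf a * pauli1_entry z a b * Vf b = \<alpha> * pauli1_entry x a b + \<beta> * pauli1_entry y a b) \<and>
        (\<forall>u v. u \<in> Lset t \<longrightarrow> v \<in> Lset t \<longrightarrow> \<alpha> * u + \<beta> * v \<in> Lset (Suc t))"
  proof (cases z)
    case PI then show ?thesis using slot_IZ[where dl=Wf and dr=Vf] VW0 comb1 by blast
  next
    case PZ then show ?thesis using slot_IZ[where dl=Wf and dr=Vf] VW0 comb1 by blast
  next
    case PX then show ?thesis using slotTd_X comb3 by blast
  next
    case PY then show ?thesis using slotTd_Y comb4 by blast
  qed
qed



lemma pauli_restrict: "pauli_tensor n p = pauli_tensor n (\<lambda>j. map p [0..<n] ! j)"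
  unfolding pauli_tensor_def by (rule cong_mat) (auto intro!: prod.cong)

lemma finite_paulis: "finite {P. is_pauli n P}"
proof -
  let ?L = "{xs. set xs \<subseteq> {PI, PX, PY, PZ} \<and> length xs = n}"
  have "{P. is_pauli n P} \<subseteq> (\<lambda>(s, xs). s \<cdot>\<^sub>m pauli_tensor n (\<lambda>j. xs ! j)) ` ({1, -1} \<times> ?L)"
  proof
    fix P assume "P \<in> {P. is_pauli n P}"
    then obtain p s where s: "s = 1 \<or> s = -1" and P: "P = s \<cdot>\<^sub>m pauli_tensor n p"
      unfolding is_pauli_def by blast
    have "map p [0..<n] \<in> ?L"
    proof -
      have "\<And>x::pauli1. x \<in> {PI, PX, PY, PZ}" by (case_tac x) auto
      then show ?thesis by auto
    qed
    moreover have "P = s \<cdot>\<^sub>m pauli_tensor n (\<lambda>j. map p [0..<n] ! j)" using P pauli_restrict by metis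
    ultimately show "P \<in> (\<lambda>(s, xs). s \<cdot>\<^sub>m pauli_tensor n (\<lambda>j. xs ! j)) ` ({1, -1} \<times> ?L)"
      using s by force
  qed
  moreover have "finite ({1::complex, -1} \<times> ?L)"
    by (intro finite_cartesian_product finite_lists_length_eq) auto
  ultimately show ?thesis by (meson finite_surj)
qed

lemma unit_facts:
  assumes "is_unitary n C"
  shows "C \<in> carrier_mat (2^n) (2^n)" "C * dagger C = 1\<^sub>m (2^n)" "dagger C * C = 1\<^sub>m (2^n)"
  using assms by (auto simp: is_unitary_def)

lemma undo_conj:
  assumes U: "is_unitary n C" and Q: "Q \<in> carrier_mat (2^n) (2^n)"
  shows "dagger C * (C * Q * dagger C) * C = Q"
proof -
  note u = unit_facts[OF U]
  have dC: "dagger C \<in> carrier_mat (2^n) (2^n)" using u(1) by simp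
  have "dagger C * (C * Q * dagger C) * C = (dagger C * C) * Q * (dagger C * C)"
    using u(1) dC Q by (simp add: assoc_mult_mat[of _ "2^n" "2^n" _ "2^n" _ "2^n"])
  also have "\<dots> = Q" using u Q by simp
  finally show ?thesis .
qed

lemma cliff_surj:
  assumes C: "is_clifford n C" and P: "is_pauli n P"
  shows "\<exists>Q. is_pauli n Q \<and> C * Q * dagger C = P"
proof -
  let ?S = "{P. is_pauli n P}"
  let ?f = "\<lambda>Q. C * Q * dagger C"
  have U: "is_unitary n C" using C by (simp add: is_clifford_def)
  have h1: "?f ` ?S \<subseteq> ?S" using C by (auto simp: is_clifford_def)
  have h2: "inj_on ?f ?S"
  proof (rule inj_onI)
    fix Q1 Q2 assume "Q1 \<in> ?S" "Q2 \<in> ?S" "?f Q1 = ?f Q2"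
    then have c1: "Q1 \<in> carrier_mat (2^n) (2^n)" and c2: "Q2 \<in> carrier_mat (2^n) (2^n)"
      and e: "C * Q1 * dagger C = C * Q2 * dagger C" using is_pauli_carrier by auto
    have "Q1 = dagger C * (C * Q1 * dagger C) * C" using undo_conj[OF U c1] by simp
    also have "\<dots> = dagger C * (C * Q2 * dagger C) * C" using e by simp
    also have "\<dots> = Q2" using undo_conj[OF U c2] by simp
    finally show "Q1 = Q2" .
  qed
  have "?f ` ?S = ?S" by (rule endo_inj_surj[OF finite_paulis h1 h2])
  moreover have "P \<in> ?S" using P by simp
  ultimately have "P \<in> ?f ` ?S" by simp
  then obtain Q where "P = ?f Q" "Q \<in> ?S" by (rule imageE)
  then show ?thesis by blast
qed

lemma pauli_is_pauli: "is_pauli n (pauli_tensor n p)"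
proof -
  have "1 \<cdot>\<^sub>m pauli_tensor n p = pauli_tensor n p" by (rule eq_matI) simp_all
  then show ?thesis unfolding is_pauli_def by (intro exI[of _ p] exI[of _ 1]) simp
qed


lemma step_cliff:
  assumes C: "is_clifford n C" and ph: "phi n t A"
  shows "phi n t (C * A * dagger C)"
  unfolding phi_def
proof (intro conjI allI)
  have U: "is_unitary n C" using C by (simp add: is_clifford_def)
  note u = unit_facts[OF U]
  have A: "A \<in> carrier_mat (2^n) (2^n)" using ph by (simp add: phi_def)
  show "C * A * dagger C \<in> carrier_mat (2^n) (2^n)" using u(1) A by simp
  fix p
  obtain Q where Q: "is_pauli n Q" "C * Q * dagger C = pauli_tensor n p"
    using cliff_surj[OF C pauli_is_pauli] by blast
  obtain q s where s: "s = 1 \<or> s = -1" and Qd: "Q = s \<cdot>\<^sub>m pauli_tensor n q" using Q(1) unfolding is_pauli_def by blast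
  have Qc: "Q \<in> carrier_mat (2^n) (2^n)" using is_pauli_carrier Q(1) by blast
  have "tr (pauli_tensor n p * (C * A * dagger C)) = tr ((dagger C * pauli_tensor n p * C) * A)"
    by (rule tr_cyc[of _ "2^n"]) (simp_all add: A u(1))
  also have "dagger C * pauli_tensor n p * C = Q" using undo_conj[OF U Qc] Q(2) by simp
  also have "tr (Q * A) = s * tr (pauli_tensor n q * A)" unfolding Qd by (rule tr_smult_left[of _ "2^n" "2^n"]) (simp_all add: A)
  finally have "tr (pauli_tensor n p * (C * A * dagger C)) / 2^n = s * (tr (pauli_tensor n q * A) / 2^n)" by simp
  moreover have "tr (pauli_tensor n q * A) / 2^n \<in> Lset t" using ph by (simp add: phi_def)
  ultimately show "tr (pauli_tensor n p * (C * A * dagger C)) / 2^n \<in> Lset t" using s L_neg by auto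
qed

lemma gate_carrier: "gate_ok n g \<Longrightarrow> gate_mat n g \<in> carrier_mat (2^n) (2^n)"
  by (cases g) (auto simp: gate_ok_def gate_mat_def is_clifford_def is_unitary_def T_on_def Tdg_on_def)

lemma step_gate: "phi n (t + (if is_T_gate g then 1 else 0)) (gate_mat n g * A * dagger (gate_mat n g))"
  if "gate_ok n g" "phi n t A"
proof (cases g)
  case (Cliff U) then show ?thesis using that step_cliff[of n U t A] by (simp add: gate_ok_def gate_mat_def is_T_gate_def)
next
  case (Tg j) then show ?thesis using that step_T[of n t A j] by (simp add: gate_ok_def gate_mat_def is_T_gate_def)
next
  case (Tdg j) then show ?thesis using that step_Tdg[of n t A j] by (simp add: gate_ok_def gate_mat_def is_T_gate_def)
qed

lemma circuit_carrier: "\<forall>g\<in>set gs. gate_ok n g \<Longrightarrow> circuit_mat n gs \<in> carrier_mat (2^n) (2^n)"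
proof (induction gs)
  case Nil then show ?case by simp
next
  case (Cons g gs) then show ?case using gate_carrier[of n g] by simp
qed

lemma dagger_mult:
  assumes A: "A \<in> carrier_mat m m" and B: "B \<in> carrier_mat m m"
  shows "dagger (A * B) = dagger B * dagger A"
proof (rule eq_matI)
  fix i j assume "i < dim_row (dagger B * dagger A)" "j < dim_col (dagger B * dagger A)"
  then have i: "i < m" and j: "j < m" using A B by (simp_all add: dagger_def)
  have "dagger (A * B) $$ (i, j) = cnj ((A * B) $$ (j, i))" using A B i j by (simp add: dagger_def)
  also have "\<dots> = (\<Sum>k<m. cnj (A $$ (j, k)) * cnj (B $$ (k, i)))" by (simp add: mult_entry[OF A B j i])
  also have "\<dots> = (\<Sum>k<m. dagger B $$ (i, k) * dagger A $$ (k, j))"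
    using A B i j by (intro sum.cong) (auto simp: dagger_def mult.commute)
  also have "\<dots> = (dagger B * dagger A) $$ (i, j)"
    using A B i j by (simp add: mult_entry[of "dagger B" m m "dagger A" m])
  finally show "dagger (A * B) $$ (i, j) = (dagger B * dagger A) $$ (i, j)" .
qed (use A B in \<open>simp_all add: dagger_def\<close>)

lemma dagger_one: "dagger (1\<^sub>m m) = 1\<^sub>m m"
  by (rule eq_matI) (auto simp: dagger_def)

lemma tcount_cons: "t_count (g # gs) = (if is_T_gate g then 1 else 0) + t_count gs"
  by (simp add: t_count_def)

lemma circ_phi: "\<forall>g\<in>set gs. gate_ok n g \<Longrightarrow> phi n s A \<Longrightarrow>
   phi n (s + t_count gs) (circuit_mat n gs * A * dagger (circuit_mat n gs))"
proof (induction gs arbitrary: s A)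
  case Nil
  then have "A \<in> carrier_mat (2^n) (2^n)" by (simp add: phi_def)
  then show ?case using Nil by (simp add: t_count_def dagger_one)
next
  case (Cons g gs)
  have g: "gate_ok n g" and gs: "\<forall>g\<in>set gs. gate_ok n g" using Cons.prems by auto
  have A: "A \<in> carrier_mat (2^n) (2^n)" using Cons.prems by (simp add: phi_def)
  have Gc: "gate_mat n g \<in> carrier_mat (2^n) (2^n)" by (rule gate_carrier[OF g])
  have Vc: "circuit_mat n gs \<in> carrier_mat (2^n) (2^n)" by (rule circuit_carrier[OF gs])
  have 1: "phi n (s + (if is_T_gate g then 1 else 0)) (gate_mat n g * A * dagger (gate_mat n g))"
    by (rule step_gate[OF g Cons.prems(2)])
  have 2: "phi n (s + (if is_T_gate g then 1 else 0) + t_count gs)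
     (circuit_mat n gs * (gate_mat n g * A * dagger (gate_mat n g)) * dagger (circuit_mat n gs))"
    by (rule Cons.IH[OF gs 1])
  have "circuit_mat n (g # gs) * A * dagger (circuit_mat n (g # gs)) =
     circuit_mat n gs * (gate_mat n g * A * dagger (gate_mat n g)) * dagger (circuit_mat n gs)"
    using Gc Vc A by (simp add: dagger_mult[OF Vc Gc] assoc_mult_mat[of _ "2^n" "2^n" _ "2^n" _ "2^n"])
  then show ?case using 2 by (simp add: tcount_cons add.assoc)
qed



definition Gd :: "nat \<Rightarrow> (nat \<Rightarrow> complex) \<Rightarrow> complex mat" where
  "Gd N d = mat N N (\<lambda>(r, c). if r = c then d r else 0)"

lemma Gd_carrier[simp]: "Gd N d \<in> carrier_mat N N" by (simp add: Gd_def)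

lemma GdL: "M \<in> carrier_mat N m \<Longrightarrow> r < N \<Longrightarrow> c < m \<Longrightarrow> (Gd N d * M) $$ (r, c) = d r * M $$ (r, c)"
proof -
  assume M: "M \<in> carrier_mat N m" and r: "r < N" and c: "c < m"
  have "(Gd N d * M) $$ (r, c) = (\<Sum>k<N. (if r = k then d r else 0) * M $$ (k, c))"
    by (subst mult_entry[OF Gd_carrier M r c]) (auto simp: Gd_def r intro!: sum.cong)
  also have "\<dots> = (\<Sum>k<N. (if k = r then d r * M $$ (r, c) else 0))"
    by (rule sum.cong) auto
  also have "\<dots> = d r * M $$ (r, c)" using r by (simp add: sum.delta)
  finally show ?thesis .
qed

lemma GdR: "M \<in> carrier_mat m N \<Longrightarrow> r < m \<Longrightarrow> c < N \<Longrightarrow> (M * Gd N d) $$ (r, c) = M $$ (r, c) * d c"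
proof -
  assume M: "M \<in> carrier_mat m N" and r: "r < m" and c: "c < N"
  have "(M * Gd N d) $$ (r, c) = (\<Sum>k<N. M $$ (r, k) * (if k = c then d k else 0))"
    by (subst mult_entry[OF M Gd_carrier r c]) (auto simp: Gd_def c intro!: sum.cong)
  also have "\<dots> = (\<Sum>k<N. (if k = c then M $$ (r, c) * d c else 0))"
    by (rule sum.cong) auto
  also have "\<dots> = M $$ (r, c) * d c" using c by (simp add: sum.delta)
  finally show ?thesis .
qed

definition dd :: "nat \<Rightarrow> nat \<Rightarrow> complex" where "dd N x = (if x = N - 1 then -1 else 1)"

lemma CkZ_Gd: "CkZ k = Gd (2^(k+1)) (dd (2^(k+1)))"
  unfolding CkZ_def Gd_def dd_def by (rule refl)

lemma dagger_Gd: "dagger (Gd N (dd N)) = Gd N (dd N)"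
  by (rule eq_matI) (auto simp: dagger_def Gd_def dd_def)

lemma quad:
  assumes N: "N > 0"
  shows "(\<Sum>r<N. \<Sum>c<N. F r c * dd N c * dd N r) =
    (\<Sum>r<N. \<Sum>c<N. F r c) - 2 * (\<Sum>r<N. F r (N - 1)) - 2 * (\<Sum>c<N. F (N - 1) c) + 4 * F (N - 1) (N - 1)"
proof -
  have pt: "\<And>r c. F r c * dd N c * dd N r = F r c - 2 * (if c = N - 1 then F r c else 0)
      - 2 * (if r = N - 1 then F r c else 0) + 4 * (if r = N - 1 then (if c = N - 1 then F r c else 0) else 0)"
    by (simp add: dd_def)
  have m: "N - 1 \<in> {..<N}" using N by simp
  have inner: "\<And>r. (\<Sum>c<N. F r c * dd N c * dd N r) = (\<Sum>c<N. F r c) - 2 * F r (N - 1)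
      - 2 * (if r = N - 1 then (\<Sum>c<N. F r c) else 0) + 4 * (if r = N - 1 then F r (N - 1) else 0)"
    unfolding pt using m
    by (simp add: sum.distrib sum_subtractf sum_distrib_left[symmetric] sum.delta' if_distrib[of "\<lambda>x. 2 * x"] if_distrib[of "\<lambda>x. 4 * x"])
  show ?thesis unfolding inner using m
    by (simp add: sum.distrib sum_subtractf sum_distrib_left[symmetric] sum.delta')
qed

lemma qbit_all1': "j < n \<Longrightarrow> qbit j (2^n - Suc 0) = 1" using qbit_all1 by simp

lemma prod_all1: "(\<Prod>j<n. g j (qbit j (2^n - Suc 0))) = (\<Prod>j<n. g j 1)"
  by (rule prod.cong) (simp_all add: qbit_all1')

definition p0 :: "nat \<Rightarrow> pauli1" where "p0 i = (if i = 0 then PX else PI)"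

lemma tr_final:
  assumes n: "n \<ge> 1"
  shows "tr (pauli_tensor n p0 * (Gd (2^n) (dd (2^n)) * pauli_tensor n p0 * Gd (2^n) (dd (2^n)))) = 2^n - 4"
proof -
  let ?N = "2^n :: nat"
  let ?X = "pauli_tensor n p0"
  define f where "f j a b = pauli1_entry (p0 j) a b * pauli1_entry (p0 j) b a" for j a b
  have Fp: "\<And>r c. r < ?N \<Longrightarrow> c < ?N \<Longrightarrow> ?X $$ (r, c) * ?X $$ (c, r) = (\<Prod>j<n. f j (qbit j r) (qbit j c))"
    by (simp add: pauli_entry f_def prod.distrib)
  have "tr (?X * (Gd ?N (dd ?N) * ?X * Gd ?N (dd ?N))) =
      (\<Sum>r<?N. \<Sum>c<?N. ?X $$ (r, c) * (Gd ?N (dd ?N) * ?X * Gd ?N (dd ?N)) $$ (c, r))"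
    by (rule tr_mult) simp_all
  also have "\<dots> = (\<Sum>r<?N. \<Sum>c<?N. (?X $$ (r, c) * ?X $$ (c, r)) * dd ?N c * dd ?N r)"
    by (intro sum.cong refl)
       (simp add: GdR[OF mult_carrier_mat[OF Gd_carrier pauli_carrier]] GdL[OF pauli_carrier] mult.assoc mult.left_commute)
  also have "\<dots> = (\<Sum>r<?N. \<Sum>c<?N. ?X $$ (r, c) * ?X $$ (c, r)) - 2 * (\<Sum>r<?N. ?X $$ (r, ?N - 1) * ?X $$ (?N - 1, r))
     - 2 * (\<Sum>c<?N. ?X $$ (?N - 1, c) * ?X $$ (c, ?N - 1)) + 4 * (?X $$ (?N - 1, ?N - 1) * ?X $$ (?N - 1, ?N - 1))"
    by (rule quad) simp
  also have "(\<Sum>r<?N. \<Sum>c<?N. ?X $$ (r, c) * ?X $$ (c, r)) = tr (?X * ?X)"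
    by (rule tr_mult[symmetric]) simp_all
  also have "\<dots> = (\<Prod>j<n. 2)" unfolding tr_pauli_pauli
    by (intro prod.cong refl) (simp add: p0_def sum2)
  also have "(\<Sum>r<?N. ?X $$ (r, ?N - 1) * ?X $$ (?N - 1, r)) = (\<Sum>r<?N. \<Prod>j<n. f j (qbit j r) 1)"
    by (intro sum.cong refl) (simp add: Fp, intro prod.cong refl, simp add: qbit_all1')
  also have "\<dots> = (\<Prod>j<n. f j 0 1 + f j 1 1)" by (rule sum_prod_bits)
  also have "\<dots> = (\<Prod>j<n. 1)" by (intro prod.cong refl) (simp add: f_def p0_def)
  also have "(\<Sum>c<?N. ?X $$ (?N - 1, c) * ?X $$ (c, ?N - 1)) = (\<Sum>c<?N. \<Prod>j<n. f j 1 (qbit j c))"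
    by (intro sum.cong refl) (simp add: Fp, intro prod.cong refl, simp add: qbit_all1')
  also have "\<dots> = (\<Prod>j<n. f j 1 0 + f j 1 1)" by (rule sum_prod_bits)
  also have "\<dots> = (\<Prod>j<n. 1)" by (intro prod.cong refl) (simp add: f_def p0_def)
  also have "?X $$ (?N - 1, ?N - 1) * ?X $$ (?N - 1, ?N - 1) = (\<Prod>j<n. f j 1 1)"
    by (simp add: Fp, intro prod.cong refl, simp add: qbit_all1')
  also have "\<dots> = 0"
  proof -
    have "f 0 1 1 = 0" by (simp add: f_def p0_def)
    then show ?thesis using n by (intro prod_zero) auto
  qed
  finally show ?thesis by simp
qed


theorem mainTheorem12:
  fixes k :: nat and gs :: "gate list"
  assumes "k \<ge> 1"
    and "\<forall>g \<in> set gs. gate_ok (k + 1) g"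
    and "circuit_mat (k + 1) gs = CkZ k"
  shows "t_count gs \<ge> 2 * k - 2"
proof (cases "k = 1")
  case True then show ?thesis by simp
next
  case False
  then have k2: "k \<ge> 2" using assms(1) by simp
  let ?n = "k + 1"
  let ?X = "pauli_tensor ?n p0"
  have ph0: "phi ?n 0 ?X" unfolding phi_def
  proof (intro conjI allI)
    show "?X \<in> carrier_mat (2^?n) (2^?n)" by (rule pauli_carrier)
    fix p show "tr (pauli_tensor ?n p * ?X) / 2^?n \<in> Lset 0" by (rule base_L0)
  qed
  have "phi ?n (0 + t_count gs) (circuit_mat ?n gs * ?X * dagger (circuit_mat ?n gs))"
    by (rule circ_phi[OF assms(2) ph0])
  then have "phi ?n (t_count gs) (Gd (2^?n) (dd (2^?n)) * ?X * Gd (2^?n) (dd (2^?n)))"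
    using assms(3) by (simp add: CkZ_Gd dagger_Gd)
  then have "tr (?X * (Gd (2^?n) (dd (2^?n)) * ?X * Gd (2^?n) (dd (2^?n)))) / 2^?n \<in> Lset (t_count gs)"
    unfolding phi_def by blast
  then have "((2::complex)^(k+1) - 4) / 2^(k+1) \<in> Lset (t_count gs)"
    using tr_final[of ?n] by simp
  then show ?thesis by (rule final_arith[OF k2])
qed

end
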